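(* Let $G$ be a finite group and let $A$ be a group acting on $G$ by automorphisms, and assume $G$ has an $A$-equivariant IYB-structure. Let $n\ge 1$ and $G^{(n)} = G\times\cdots\times G$ ($n$ factors). Let the wreath product $A\wr \Sigma_n = A^n \rtimes \Sigma_n$ ($\Sigma_n$ the symmetric group on $n$ points) act on $G^{(n)}$ by letting $(a_1,\ldots,a_n)\cdot\sigma$ send $(g_1,\ldots,g_n)$ to $({}^{a_1}g_{\sigma^{-1}(1)},\ldots,{}^{a_n}g_{\sigma^{-1}(n)})$. Then $G^{(n)}$ has an $A\wr\Sigma_n$-equivariant IYB-structure.
   Context: For a group $G$ and a left $\mathbb Z G$-module $M$, a $1$-cocycle is a map $\chi: G \to M$ with $\chi(gh) = \chi(g) + g\chi(h)$ for all $g,h\in G$. A finite group $G$ is called Involutive Yang-Baxter (IYB) if there is a left $\mathbb Z G$-module $M$ and a bijective $1$-cocycle $\chi: G\to M$. If a group $A$ acts on $G$ from the left by automorphisms (written $g\mapsto {}^a g$), an $A$-equivariant IYB-structure on $G$ is a pair $(M,\chi)$ where $M$ is a left $\mathbb Z[G\rtimes A]$-module and $\chi: G\to M$ (with $M$ regarded as a $G$-module by restriction) is a bijective $1$-cocycle satisfying $\chi({}^a g) = a\chi(g)$ for all $a\in A$, $g\in G$. *)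

theory Defs
  imports "HOL-Algebra.Algebra" "HOL-Combinatorics.Permutations"
begin

definition aut_action :: "('a, 'x) monoid_scheme \<Rightarrow> ('g, 'y) monoid_scheme \<Rightarrow> ('a \<Rightarrow> 'g \<Rightarrow> 'g) \<Rightarrow> bool" where
  "aut_action A G phi \<longleftrightarrow>
     (\<forall>a\<in>carrier A. phi a \<in> hom G G) \<and>
     (\<forall>g\<in>carrier G. phi \<one>\<^bsub>A\<^esub> g = g) \<and>
     (\<forall>a\<in>carrier A. \<forall>b\<in>carrier A. \<forall>g\<in>carrier G. phi (a \<otimes>\<^bsub>A\<^esub> b) g = phi a (phi b g))"

definition semidirect :: "('g, 'y) monoid_scheme \<Rightarrow> ('a, 'x) monoid_scheme \<Rightarrow> ('a \<Rightarrow> 'g \<Rightarrow> 'g) \<Rightarrow> ('g \<times> 'a) monoid" where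
  "semidirect G A phi = \<lparr> carrier = carrier G \<times> carrier A,
     monoid.mult = (\<lambda>(g, a) (h, b). (g \<otimes>\<^bsub>G\<^esub> phi a h, a \<otimes>\<^bsub>A\<^esub> b)),
     one = (\<one>\<^bsub>G\<^esub>, \<one>\<^bsub>A\<^esub>) \<rparr>"

text \<open>A left ZH-module: an abelian group M (written multiplicatively, as in HOL-Algebra)
  on which H acts (on the left) by group endomorphisms.\<close>
definition ZG_module :: "('h, 'x) monoid_scheme \<Rightarrow> ('m, 'z) monoid_scheme \<Rightarrow> ('h \<Rightarrow> 'm \<Rightarrow> 'm) \<Rightarrow> bool" where
  "ZG_module H M rho \<longleftrightarrow> comm_group M \<and>
     (\<forall>h\<in>carrier H. rho h \<in> hom M M) \<and>
     (\<forall>m\<in>carrier M. rho \<one>\<^bsub>H\<^esub> m = m) \<and>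
     (\<forall>h\<in>carrier H. \<forall>k\<in>carrier H. \<forall>m\<in>carrier M. rho (h \<otimes>\<^bsub>H\<^esub> k) m = rho h (rho k m))"

definition equivariant_IYB_structure ::
  "('g, 'y) monoid_scheme \<Rightarrow> ('a, 'x) monoid_scheme \<Rightarrow> ('a \<Rightarrow> 'g \<Rightarrow> 'g)
   \<Rightarrow> ('m, 'z) monoid_scheme \<Rightarrow> ('g \<times> 'a \<Rightarrow> 'm \<Rightarrow> 'm) \<Rightarrow> ('g \<Rightarrow> 'm) \<Rightarrow> bool" where
  "equivariant_IYB_structure G A phi M rho chi \<longleftrightarrow>
     ZG_module (semidirect G A phi) M rho \<and>
     bij_betw chi (carrier G) (carrier M) \<and>
     (\<forall>g\<in>carrier G. \<forall>h\<in>carrier G.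
        chi (g \<otimes>\<^bsub>G\<^esub> h) = chi g \<otimes>\<^bsub>M\<^esub> rho (g, \<one>\<^bsub>A\<^esub>) (chi h)) \<and>
     (\<forall>a\<in>carrier A. \<forall>g\<in>carrier G. chi (phi a g) = rho (\<one>\<^bsub>G\<^esub>, a) (chi g))"

definition wreath :: "('a, 'x) monoid_scheme \<Rightarrow> nat \<Rightarrow> ((nat \<Rightarrow> 'a) \<times> (nat \<Rightarrow> nat)) monoid" where
  "wreath A n = \<lparr> carrier = (\<Pi>\<^sub>E i\<in>{1..n}. carrier A) \<times> {s. s permutes {1..n}},
     monoid.mult = (\<lambda>(a, s) (b, t). ((\<lambda>i\<in>{1..n}. a i \<otimes>\<^bsub>A\<^esub> b (Hilbert_Choice.inv s i)), s \<circ> t)),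
     one = ((\<lambda>i\<in>{1..n}. \<one>\<^bsub>A\<^esub>), id) \<rparr>"

definition wreath_action :: "nat \<Rightarrow> ('a \<Rightarrow> 'g \<Rightarrow> 'g) \<Rightarrow> (nat \<Rightarrow> 'a) \<times> (nat \<Rightarrow> nat) \<Rightarrow> (nat \<Rightarrow> 'g) \<Rightarrow> (nat \<Rightarrow> 'g)" where
  "wreath_action n phi = (\<lambda>(a, s) g. (\<lambda>i\<in>{1..n}. phi (a i) (g (Hilbert_Choice.inv s i))))"

end

theory Submission
  imports Defs
begin

theorem mainTheorem3:
  fixes G :: "'g monoid" and A :: "'a monoid" and phi :: "'a \<Rightarrow> 'g \<Rightarrow> 'g" and n :: nat
  assumes "group G" and "finite (carrier G)" and "group A"
    and "aut_action A G phi"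
    and "\<exists>(M :: 'm monoid) rho chi. equivariant_IYB_structure G A phi M rho chi"
    and "n \<ge> 1"
  shows "\<exists>(M :: (nat \<Rightarrow> 'm) monoid) rho chi.
           equivariant_IYB_structure (product_group {1..n} (\<lambda>_. G)) (wreath A n)
             (wreath_action n phi) M rho chi"
proof -
  obtain M :: "'m monoid" and rho chi where E: "equivariant_IYB_structure G A phi M rho chi"
    using assms(5) by blast
  define I where "I = {1..n}"
  have mod: "ZG_module (semidirect G A phi) M rho" and bij: "bij_betw chi (carrier G) (carrier M)"
    and coc: "\<And>g h. g \<in> carrier G \<Longrightarrow> h \<in> carrier G \<Longrightarrow> chi (g \<otimes>\<^bsub>G\<^esub> h) = chi g \<otimes>\<^bsub>M\<^esub> rho (g, \<one>\<^bsub>A\<^esub>) (chi h)"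
    and eqv: "\<And>a g. a \<in> carrier A \<Longrightarrow> g \<in> carrier G \<Longrightarrow> chi (phi a g) = rho (\<one>\<^bsub>G\<^esub>, a) (chi g)"
    using E unfolding equivariant_IYB_structure_def by auto
  have cM: "comm_group M" using mod unfolding ZG_module_def by auto
  have rhom: "\<And>g a. g \<in> carrier G \<Longrightarrow> a \<in> carrier A \<Longrightarrow> rho (g,a) \<in> hom M M"
    using mod unfolding ZG_module_def semidirect_def by auto
  have rho1: "\<And>m. m \<in> carrier M \<Longrightarrow> rho (\<one>\<^bsub>G\<^esub>, \<one>\<^bsub>A\<^esub>) m = m"
    using mod unfolding ZG_module_def semidirect_def by auto
  have rhoc: "\<And>g a h b m. g \<in> carrier G \<Longrightarrow> a \<in> carrier A \<Longrightarrow> h \<in> carrier G \<Longrightarrow> b \<in> carrier A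
      \<Longrightarrow> m \<in> carrier M \<Longrightarrow> rho (g \<otimes>\<^bsub>G\<^esub> phi a h, a \<otimes>\<^bsub>A\<^esub> b) m = rho (g,a) (rho (h,b) m)"
    using mod unfolding ZG_module_def semidirect_def by auto
  have rhoC: "\<And>g a m. g \<in> carrier G \<Longrightarrow> a \<in> carrier A \<Longrightarrow> m \<in> carrier M \<Longrightarrow> rho (g,a) m \<in> carrier M"
    using rhom by (auto simp: hom_def)
  have rhoM: "\<And>g a m m'. g \<in> carrier G \<Longrightarrow> a \<in> carrier A \<Longrightarrow> m \<in> carrier M \<Longrightarrow> m' \<in> carrier M
      \<Longrightarrow> rho (g,a) (m \<otimes>\<^bsub>M\<^esub> m') = rho (g,a) m \<otimes>\<^bsub>M\<^esub> rho (g,a) m'"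
    using rhom by (auto simp: hom_def)
  have invI: "\<And>s i. s permutes I \<Longrightarrow> i \<in> I \<Longrightarrow> Hilbert_Choice.inv s i \<in> I"
    by (simp add: permutes_in_image permutes_inv)
  define M' :: "(nat \<Rightarrow> 'm) monoid" where "M' = product_group I (\<lambda>_. M)"
  define rho' where "rho' = (\<lambda>(g :: nat \<Rightarrow> 'g, (a :: nat \<Rightarrow> 'a, s :: nat \<Rightarrow> nat)) (m :: nat \<Rightarrow> 'm).
      (\<lambda>i\<in>I. rho (g i, a i) (m (Hilbert_Choice.inv s i))))"
  define chi' where "chi' = (\<lambda>g :: nat \<Rightarrow> 'g. (\<lambda>i\<in>I. chi (g i)))"
  have "equivariant_IYB_structure (product_group I (\<lambda>_. G)) (wreath A n)
             (wreath_action n phi) M' rho' chi'"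
    unfolding equivariant_IYB_structure_def
  proof (intro conjI ballI)
    show "ZG_module (semidirect (product_group I (\<lambda>_. G)) (wreath A n) (wreath_action n phi)) M' rho'"
      unfolding ZG_module_def
    proof (intro conjI ballI)
      have gM: "group M'" unfolding M'_def using cM by (simp add: comm_group.axioms(2))
      show "comm_group M'"
      proof (rule group.group_comm_groupI[OF gM])
        fix x y assume "x \<in> carrier M'" "y \<in> carrier M'"
        then show "x \<otimes>\<^bsub>M'\<^esub> y = y \<otimes>\<^bsub>M'\<^esub> x"
          using cM by (auto simp: M'_def PiE_iff comm_groupE(4) intro!: restrict_ext)
      qed
    next
      fix h assume h: "h \<in> carrier (semidirect (product_group I (\<lambda>_. G)) (wreath A n) (wreath_action n phi))"
      obtain g b s where hs: "h = (g,(b,s))" by (cases h) fastforce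
      have g: "g \<in> (\<Pi>\<^sub>E i\<in>I. carrier G)" and b: "\<And>i. i \<in> I \<Longrightarrow> b i \<in> carrier A" and s: "s permutes I"
        using h hs by (auto simp: wreath_def I_def semidirect_def)
      show "rho' h \<in> hom M' M'"
        unfolding hom_def
      proof (intro CollectI conjI ballI)
        show "rho' h \<in> carrier M' \<rightarrow> carrier M'"
          using g b s invI rhoC by (auto simp: hs rho'_def M'_def PiE_iff)
        fix x y assume "x \<in> carrier M'" "y \<in> carrier M'"
        then show "rho' h (x \<otimes>\<^bsub>M'\<^esub> y) = rho' h x \<otimes>\<^bsub>M'\<^esub> rho' h y"
          using g b s invI rhoM by (auto simp: hs rho'_def M'_def PiE_iff intro!: restrict_ext)
      qed
    next
      fix m assume "m \<in> carrier M'"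
      show "rho' \<one>\<^bsub>semidirect (product_group I (\<lambda>_. G)) (wreath A n) (wreath_action n phi)\<^esub> m = m"
      proof (intro ext)
        fix i
        show "rho' \<one>\<^bsub>semidirect (product_group I (\<lambda>_. G)) (wreath A n) (wreath_action n phi)\<^esub> m i = m i"
          using rho1 \<open>m \<in> carrier M'\<close> PiE_arb[of m I "\<lambda>_. carrier M" i]
          by (cases "i \<in> I") (auto simp: rho'_def M'_def PiE_iff semidirect_def wreath_def I_def)
      qed
    next
      fix h k m
      assume h: "h \<in> carrier (semidirect (product_group I (\<lambda>_. G)) (wreath A n) (wreath_action n phi))"
        and k: "k \<in> carrier (semidirect (product_group I (\<lambda>_. G)) (wreath A n) (wreath_action n phi))"
        and m: "m \<in> carrier M'"
      obtain g b s where hs: "h = (g,(b,s))" by (cases h) fastforce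
      have g: "g \<in> (\<Pi>\<^sub>E i\<in>I. carrier G)" and b: "\<And>i. i \<in> I \<Longrightarrow> b i \<in> carrier A" and s: "s permutes I"
        using h hs by (auto simp: wreath_def I_def semidirect_def)
      obtain g' b' s' where ks: "k = (g',(b',s'))" by (cases k) fastforce
      have g': "g' \<in> (\<Pi>\<^sub>E i\<in>I. carrier G)" and b': "\<And>i. i \<in> I \<Longrightarrow> b' i \<in> carrier A" and s': "s' permutes I"
        using k ks by (auto simp: wreath_def I_def semidirect_def)
      have inv_comp: "Hilbert_Choice.inv (s \<circ> s') = Hilbert_Choice.inv s' \<circ> Hilbert_Choice.inv s"
        using s s' by (simp add: o_inv_distrib permutes_bij)
      show "rho' (h \<otimes>\<^bsub>semidirect (product_group I (\<lambda>_. G)) (wreath A n) (wreath_action n phi)\<^esub> k) m = rho' h (rho' k m)"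
      proof (rule ext)
        fix i
        show "rho' (h \<otimes>\<^bsub>semidirect (product_group I (\<lambda>_. G)) (wreath A n) (wreath_action n phi)\<^esub> k) m i = rho' h (rho' k m) i"
        proof (cases "i \<in> I")
          case True
          then have si: "Hilbert_Choice.inv s i \<in> I" using invI s by blast
          then have mi: "m (Hilbert_Choice.inv s' (Hilbert_Choice.inv s i)) \<in> carrier M"
            using invI s' m by (auto simp: M'_def PiE_iff)
          show ?thesis using True si mi g g' b b' rhoc[of "g i" "b i" "g' (Hilbert_Choice.inv s i)" "b' (Hilbert_Choice.inv s i)"]
            by (auto simp: hs ks rho'_def semidirect_def wreath_def wreath_action_def I_def inv_comp PiE_iff)
        next
          case False
          then show ?thesis by (auto simp: hs ks rho'_def semidirect_def wreath_def)
        qed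
      qed
    qed
    show "bij_betw chi' (carrier (product_group I (\<lambda>_. G))) (carrier M')"
    proof (rule bij_betwI[where g="\<lambda>m. \<lambda>i\<in>I. inv_into (carrier G) chi (m i)"])
      show "chi' \<in> carrier (product_group I (\<lambda>_. G)) \<rightarrow> carrier M'"
        using bij by (auto simp: chi'_def M'_def PiE_iff bij_betw_def)
      show "(\<lambda>m. \<lambda>i\<in>I. inv_into (carrier G) chi (m i)) \<in> carrier M' \<rightarrow> carrier (product_group I (\<lambda>_. G))"
        using bij by (auto simp: M'_def PiE_iff bij_betw_def inv_into_into)
      show "(\<lambda>i\<in>I. inv_into (carrier G) chi (chi' x i)) = x" if x: "x \<in> carrier (product_group I (\<lambda>_. G))" for x
      proof (rule ext)
        fix i show "(\<lambda>i\<in>I. inv_into (carrier G) chi (chi' x i)) i = x i"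
        proof (cases "i \<in> I")
          case True
          then have "x i \<in> carrier G" using x by (auto simp: PiE_iff)
          then show ?thesis using True bij by (simp add: chi'_def bij_betw_def)
        next
          case False
          then show ?thesis using x PiE_arb[of x I "\<lambda>_. carrier G" i] by simp
        qed
      qed
      show "chi' (\<lambda>i\<in>I. inv_into (carrier G) chi (y i)) = y" if y: "y \<in> carrier M'" for y
      proof (rule ext)
        fix i show "chi' (\<lambda>i\<in>I. inv_into (carrier G) chi (y i)) i = y i"
        proof (cases "i \<in> I")
          case True
          then have "y i \<in> chi ` carrier G" using y bij by (auto simp: PiE_iff M'_def bij_betw_def)
          then show ?thesis using True by (simp add: chi'_def f_inv_into_f)
        next
          case False
          then show ?thesis using y PiE_arb[of y I "\<lambda>_. carrier M" i] by (simp add: chi'_def M'_def)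
        qed
      qed
    qed
  next
    fix g h assume g: "g \<in> carrier (product_group I (\<lambda>_. G))" and h: "h \<in> carrier (product_group I (\<lambda>_. G))"
    show "chi' (g \<otimes>\<^bsub>product_group I (\<lambda>_. G)\<^esub> h) =
         chi' g \<otimes>\<^bsub>M'\<^esub> rho' (g, \<one>\<^bsub>wreath A n\<^esub>) (chi' h)"
      using g h by (auto simp: M'_def rho'_def chi'_def wreath_def I_def coc PiE_iff intro!: restrict_ext)
  next
    fix a g assume a: "a \<in> carrier (wreath A n)" and g: "g \<in> carrier (product_group I (\<lambda>_. G))"
    obtain b s where as: "a = (b,s)" by fastforce
    have b: "\<And>i. i \<in> I \<Longrightarrow> b i \<in> carrier A" and s: "s permutes I"
      using a as by (auto simp: wreath_def I_def)
    show "chi' (wreath_action n phi a g) = rho' (\<one>\<^bsub>product_group I (\<lambda>_. G)\<^esub>, a) (chi' g)"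
      using g b s invI by (auto simp: as rho'_def chi'_def wreath_action_def I_def eqv PiE_iff intro!: restrict_ext)
  qed
  then show ?thesis unfolding I_def by blast
qed

end
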